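(* Let $A\in\mathbb{R}^{n\times d}$, let $f:\mathbb{R}^n\to\mathbb{R}\cup\{+\infty\}$ and $g:\mathbb{R}^d\to\mathbb{R}\cup\{+\infty\}$ be closed convex, with $f$ $(1/\gamma)$-smooth ($\gamma\ge0$) and $g$ $\mu$-strongly convex ($\mu\ge0$), and let $R=\|A\|_2$. Consider the iterates of the DAPD method (described in the context) and the functions $\phi_t$ and values $\phi_t^*=\min_{x}\phi_t(x)$ defined in the context. Fix $t\ge0$ and assume $\eta_t(1+B_{t-1}\mu)\ge\beta_t$. Then $$\phi_{t+1}^*-\phi_t^*\ge\beta_t\left(g(\bar{x}^{t+1})+\langle y^{t+1},A\bar{x}^{t+1}\rangle\right)-\frac{\beta_tR^2\eta_t}{2}\|y^{t+1}-y^t\|_2^2.$$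
   Context: $f^*$ is the convex conjugate of $f$; $\operatorname{prox}_h(u)=\arg\min_v\{h(v)+\frac12\|v-u\|_2^2\}$. Convention: $\gamma=0$ means $f$ need not be smooth; $\mu=0$ means $g$ is merely convex. DAPD method: given $x^0\in\mathbb{R}^d$, $y^0\in\mathbb{R}^n$ and positive step sizes $\{\beta_t\},\{\eta_t\},\{\tau_t\}$, set $B_t=\sum_{k=0}^t\beta_k$ (with $B_{-1}=0$) and for $t=0,1,\dots$ compute $\bar{x}^{t+1}=\operatorname{prox}_{\eta_t g}(x^t-\eta_tA^\top y^t)$, $y^{t+1}=\operatorname{prox}_{\tau_t f^*}(y^t+\tau_tA\bar{x}^{t+1})$, $x^{t+1}=\operatorname{prox}_{B_tg}(x^0-\sum_{k=0}^t\beta_kA^\top y^{k+1})$. Potential: $\phi_t(x)=\frac12\|x-x^0\|_2^2+\sum_{k=0}^{t-1}\beta_k\big(g(x)+\langle y^{k+1},Ax\rangle\big)$ (so $\phi_0(x)=\frac12\|x-x^0\|_2^2$), and $\phi_t^*=\min_{x\in\mathbb{R}^d}\phi_t(x)$. *)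

theory Defs
  imports "HOL-Analysis.Analysis" "HOL-Library.Extended_Real"
begin

text \<open>Extended-real-valued functions R^m -> R \<union> {+\<infinity>} are modelled as functions
  into ereal that never take the value -\<infinity>.\<close>

definition proper_fun :: "('a::real_normed_vector \<Rightarrow> ereal) \<Rightarrow> bool" where
  "proper_fun h \<longleftrightarrow> (\<forall>x. h x \<noteq> -\<infinity>) \<and> (\<exists>x. h x \<noteq> \<infinity>)"

definition closed_fun :: "('a::real_normed_vector \<Rightarrow> ereal) \<Rightarrow> bool" where
  "closed_fun h \<longleftrightarrow> closed {(x, z::real). h x \<le> ereal z}"

definition strongly_convex_fun :: "real \<Rightarrow> ('a::real_inner \<Rightarrow> ereal) \<Rightarrow> bool" where
  "strongly_convex_fun mu h \<longleftrightarrow>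
     (\<forall>x y. \<forall>s::real. 0 \<le> s \<and> s \<le> 1 \<longrightarrow>
        h ((1 - s) *\<^sub>R x + s *\<^sub>R y)
          \<le> ereal (1 - s) * h x + ereal s * h y - ereal (mu / 2 * s * (1 - s) * (norm (x - y))\<^sup>2))"

definition convex_fun :: "('a::real_inner \<Rightarrow> ereal) \<Rightarrow> bool" where
  "convex_fun h \<longleftrightarrow> strongly_convex_fun 0 h"

text \<open>(1/gamma)-smoothness; gamma = 0 imposes no smoothness\<close>
definition smooth_fun :: "real \<Rightarrow> ('a::real_inner \<Rightarrow> ereal) \<Rightarrow> bool" where
  "smooth_fun gamma h \<longleftrightarrow>
     (gamma > 0 \<longrightarrow>
        (\<forall>x. h x \<noteq> \<infinity> \<and> h x \<noteq> -\<infinity>) \<and>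
        (\<exists>G. (\<forall>x. ((\<lambda>z. real_of_ereal (h z)) has_derivative (\<lambda>v. G x \<bullet> v)) (at x)) \<and>
             (\<forall>x y. norm (G x - G y) \<le> (1 / gamma) * norm (x - y))))"

definition conj_fun :: "('a::real_inner \<Rightarrow> ereal) \<Rightarrow> 'a \<Rightarrow> ereal" where
  "conj_fun h y = (SUP x. ereal (y \<bullet> x) - h x)"

definition is_prox :: "('a::real_inner \<Rightarrow> ereal) \<Rightarrow> 'a \<Rightarrow> 'a \<Rightarrow> bool" where
  "is_prox h u v \<longleftrightarrow>
     (\<forall>w. h v + ereal ((norm (v - u))\<^sup>2 / 2) \<le> h w + ereal ((norm (w - u))\<^sup>2 / 2))"

definition scale_fun :: "real \<Rightarrow> ('a \<Rightarrow> ereal) \<Rightarrow> 'a \<Rightarrow> ereal" where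
  "scale_fun c h = (\<lambda>x. ereal c * h x)"

definition DAPD_phi ::
  "real^'d^'n \<Rightarrow> (real^'d \<Rightarrow> ereal) \<Rightarrow> (nat \<Rightarrow> real) \<Rightarrow> real^'d \<Rightarrow> (nat \<Rightarrow> real^'n)
     \<Rightarrow> nat \<Rightarrow> real^'d \<Rightarrow> ereal" where
  "DAPD_phi A g beta x0 y t x =
     ereal ((norm (x - x0))\<^sup>2 / 2) + (\<Sum>k<t. ereal (beta k) * (g x + ereal (y (Suc k) \<bullet> (A *v x))))"

definition DAPD_phi_star ::
  "real^'d^'n \<Rightarrow> (real^'d \<Rightarrow> ereal) \<Rightarrow> (nat \<Rightarrow> real) \<Rightarrow> real^'d \<Rightarrow> (nat \<Rightarrow> real^'n)
     \<Rightarrow> nat \<Rightarrow> ereal" where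
  "DAPD_phi_star A g beta x0 y t = (INF x. DAPD_phi A g beta x0 y t x)"

end

theory Submission
  imports Defs
begin

lemma norm_comb_sq:
  fixes a b :: "'a::real_inner"
  shows "(norm ((1 - s) *\<^sub>R a + s *\<^sub>R b))\<^sup>2 = (1 - s) * (norm a)\<^sup>2 + s * (norm b)\<^sup>2 - s * (1 - s) * (norm (a - b))\<^sup>2"
  by (simp add: power2_norm_eq_inner inner_add_left inner_add_right inner_diff_left inner_diff_right inner_commute algebra_simps)

lemma aux_comb:
  fixes X Z s :: real
  shows "X \<le> (1 - s) * X + s * Z \<Longrightarrow> s * X \<le> s * Z"
  by (simp add: algebra_simps)

lemma le_limit_s:
  fixes X Y K :: real
  assumes K: "K \<ge> 0" and h: "\<And>s. 0 < s \<Longrightarrow> s < 1 \<Longrightarrow> X \<le> Y - (1 - s) * K"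
  shows "X \<le> Y - K"
proof (rule field_le_epsilon)
  fix e :: real assume e: "e > 0"
  define s where "s = min (1/2) (e / (K + 1))"
  have s0: "0 < s" "s < 1" using e K by (auto simp: s_def)
  have "s * K \<le> e / (K + 1) * K" using K by (intro mult_right_mono) (auto simp: s_def)
  also have "\<dots> \<le> e" using e K by (simp add: field_simps)
  finally have "s * K \<le> e" .
  with h[OF s0] show "X \<le> Y - K + e" by (simp add: algebra_simps)
qed

lemma three_point:
  fixes g :: "'a::real_inner \<Rightarrow> ereal"
  assumes gp: "proper_fun g" and gs: "strongly_convex_fun mu g" and mu: "mu \<ge> 0"
    and c: "c > 0" and pr: "is_prox (scale_fun c g) u v"
  shows "g v \<noteq> \<infinity> \<and> g v \<noteq> -\<infinity> \<and>
    (\<forall>w r. g w = ereal r \<longrightarrow>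
      c * real_of_ereal (g v) + (norm (v - u))\<^sup>2 / 2 + (1 + c * mu) / 2 * (norm (w - v))\<^sup>2
        \<le> c * r + (norm (w - u))\<^sup>2 / 2)"
proof -
  from gp obtain w0 where w0: "g w0 \<noteq> \<infinity>" and ninf: "\<And>x. g x \<noteq> -\<infinity>" by (auto simp: proper_fun_def)
  have pr': "\<And>w. ereal c * g v + ereal ((norm (v - u))\<^sup>2 / 2) \<le> ereal c * g w + ereal ((norm (w - u))\<^sup>2 / 2)"
    using pr by (auto simp: is_prox_def scale_fun_def)
  have "g v \<noteq> \<infinity>"
  proof
    assume "g v = \<infinity>"
    with pr'[of w0] w0 ninf[of w0] c show False by (cases "g w0") auto
  qed
  with ninf[of v] obtain rv where rv: "g v = ereal rv" by (cases "g v") auto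
  have main: "c * rv + (norm (v - u))\<^sup>2 / 2 + (1 + c * mu) / 2 * (norm (w - v))\<^sup>2
        \<le> c * r + (norm (w - u))\<^sup>2 / 2" if gw: "g w = ereal r" for w r
  proof -
    define D where "D = (norm (w - v))\<^sup>2"
    have hs: "c * rv + (norm (v - u))\<^sup>2 / 2 \<le> (c * r + (norm (w - u))\<^sup>2 / 2) - (1 - s) * ((1 + c * mu) / 2 * D)"
      if s: "0 < s" "s < 1" for s
    proof -
      define p where "p = (1 - s) *\<^sub>R v + s *\<^sub>R w"
      have sc: "g p \<le> ereal (1 - s) * g v + ereal s * g w - ereal (mu / 2 * s * (1 - s) * (norm (v - w))\<^sup>2)"
        using gs s unfolding strongly_convex_fun_def p_def by auto
      have nvw: "norm (v - w) = norm (w - v)" by (simp add: norm_minus_commute)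
      from sc rv gw have sc': "g p \<le> ereal ((1 - s) * rv + s * r - mu / 2 * s * (1 - s) * D)"
        by (simp add: D_def nvw)
      with ninf[of p] obtain rp where rp: "g p = ereal rp" by (cases "g p") auto
      from sc' rp have rp_le: "rp \<le> (1 - s) * rv + s * r - mu / 2 * s * (1 - s) * D" by simp
      from pr'[of p] rp rv have "c * rv + (norm (v - u))\<^sup>2 / 2 \<le> c * rp + (norm (p - u))\<^sup>2 / 2" by simp
      moreover have "p - u = (1 - s) *\<^sub>R (v - u) + s *\<^sub>R (w - u)" by (simp add: p_def algebra_simps)
      hence "(norm (p - u))\<^sup>2 = (1 - s) * (norm (v - u))\<^sup>2 + s * (norm (w - u))\<^sup>2 - s * (1 - s) * D"
        by (simp add: norm_comb_sq D_def nvw[symmetric])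
      moreover have "c * rp \<le> c * ((1 - s) * rv + s * r - mu / 2 * s * (1 - s) * D)"
        using rp_le c by (simp add: mult_left_mono)
      ultimately have i1: "c * rv + (norm (v - u))\<^sup>2 / 2 \<le> c * ((1 - s) * rv + s * r - mu / 2 * s * (1 - s) * D)
          + ((1 - s) * (norm (v - u))\<^sup>2 + s * (norm (w - u))\<^sup>2 - s * (1 - s) * D) / 2"
        by (smt (verit))
      have eq: "c * ((1 - s) * rv + s * r - mu / 2 * s * (1 - s) * D)
          + ((1 - s) * (norm (v - u))\<^sup>2 + s * (norm (w - u))\<^sup>2 - s * (1 - s) * D) / 2
          = (1 - s) * (c * rv + (norm (v - u))\<^sup>2 / 2) + s * ((c * r + (norm (w - u))\<^sup>2 / 2) - (1 - s) * ((1 + c * mu) / 2 * D))"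
        by (simp add: field_simps)
      have "s * (c * rv + (norm (v - u))\<^sup>2 / 2) \<le> s * ((c * r + (norm (w - u))\<^sup>2 / 2) - (1 - s) * ((1 + c * mu) / 2 * D))"
        using i1 unfolding eq by (rule aux_comb)
      thus ?thesis using s by (simp add: mult_le_cancel_left_pos)
    qed
    have k: "(1 + c * mu) / 2 * D \<ge> 0" using c mu by (simp add: D_def)
    have "c * rv + (norm (v - u))\<^sup>2 / 2 \<le> (c * r + (norm (w - u))\<^sup>2 / 2) - (1 + c * mu) / 2 * D"
      by (rule le_limit_s[OF k hs])
    thus ?thesis by (simp add: D_def)
  qed
  show ?thesis using \<open>g v \<noteq> \<infinity>\<close> ninf main rv by simp
qed

lemma phi_fin:
  assumes "g z = ereal r"
  shows "DAPD_phi A g beta x0 y t z = ereal ((norm (z - x0))\<^sup>2 / 2 + (\<Sum>k<t. beta k * (r + y (Suc k) \<bullet> (A *v z))))"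
  using assms by (simp add: DAPD_phi_def)

lemma phi_inf:
  assumes "g z = \<infinity>" "\<And>k. beta k > 0" "t > 0"
  shows "DAPD_phi A g beta x0 y t z = \<infinity>"
proof -
  have "(\<Sum>k<t. ereal (beta k) * (g z + ereal (y (Suc k) \<bullet> (A *v z)))) = \<infinity>"
  proof -
    have "ereal (beta 0) * (g z + ereal (y (Suc 0) \<bullet> (A *v z))) = \<infinity>"
      using assms(1) assms(2)[of 0] by simp
    thus ?thesis unfolding sum_Pinfty using assms(3) by (intro conjI bexI[of _ 0]) auto
  qed
  thus ?thesis by (simp add: DAPD_phi_def)
qed

lemma sum_lin:
  fixes A :: "real^'d^'n"
  shows "(\<Sum>k\<in>S. beta k * (r + y (Suc k) \<bullet> (A *v z)))
     = (\<Sum>k\<in>S. beta k) * r + (\<Sum>k\<in>S. beta k *\<^sub>R (transpose A *v y (Suc k))) \<bullet> z"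
  by (simp add: distrib_left sum.distrib sum_distrib_right sum_distrib_left inner_sum_left dot_lmul_matrix mult.commute)

lemma norm_shift_sq:
  fixes z x0 w :: "'a::real_inner"
  shows "(norm (z - (x0 - w)))\<^sup>2 = (norm (z - x0))\<^sup>2 + 2 * (w \<bullet> z) - 2 * (w \<bullet> x0) + (norm w)\<^sup>2"
  by (simp add: power2_norm_eq_inner inner_add_left inner_add_right inner_diff_left inner_diff_right inner_commute algebra_simps)

lemma amgm_aux:
  fixes a b e :: real
  assumes "e > 0"
  shows "a * b \<le> a\<^sup>2 / (2 * e) + e * b\<^sup>2 / 2"
proof -
  have "0 \<le> (a - e * b)\<^sup>2" by simp
  hence "2 * e * (a * b) \<le> a\<^sup>2 + e\<^sup>2 * b\<^sup>2" by (simp add: power2_eq_square algebra_simps)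
  hence "a * b \<le> (a\<^sup>2 + e\<^sup>2 * b\<^sup>2) / (2 * e)" using assms by (simp add: field_simps)
  also have "\<dots> = a\<^sup>2 / (2 * e) + e * b\<^sup>2 / 2" using assms by (simp add: field_simps power2_eq_square)
  finally show ?thesis .
qed

theorem lemma2p1:
  fixes A :: "real^'d^'n"
    and f :: "real^'n \<Rightarrow> ereal" and g :: "real^'d \<Rightarrow> ereal"
    and gamma mu :: real
    and beta eta tau :: "nat \<Rightarrow> real"
    and x xbar :: "nat \<Rightarrow> real^'d" and y :: "nat \<Rightarrow> real^'n"
    and t :: nat
  assumes f_cl: "proper_fun f" "closed_fun f" "convex_fun f"
    and f_smooth: "gamma \<ge> 0" "smooth_fun gamma f"
    and g_cl: "proper_fun g" "closed_fun g"
    and g_sc: "mu \<ge> 0" "strongly_convex_fun mu g"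
    and steps: "\<And>k. beta k > 0" "\<And>k. eta k > 0" "\<And>k. tau k > 0"
    and xbar_def: "\<And>k. is_prox (scale_fun (eta k) g) (x k - eta k *\<^sub>R (transpose A *v y k)) (xbar (Suc k))"
    and y_def: "\<And>k. is_prox (scale_fun (tau k) (conj_fun f)) (y k + tau k *\<^sub>R (A *v xbar (Suc k))) (y (Suc k))"
    and x_def: "\<And>k. is_prox (scale_fun (\<Sum>j\<le>k. beta j) g)
                    (x 0 - (\<Sum>j\<le>k. beta j *\<^sub>R (transpose A *v y (Suc j)))) (x (Suc k))"
    and step_cond: "eta t * (1 + (\<Sum>k<t. beta k) * mu) \<ge> beta t"
  shows "DAPD_phi_star A g beta (x 0) y (Suc t)
           \<ge> DAPD_phi_star A g beta (x 0) y t
             + ereal (beta t) * (g (xbar (Suc t)) + ereal (y (Suc t) \<bullet> (A *v xbar (Suc t))))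
             - ereal (beta t * (onorm (\<lambda>v. A *v v))\<^sup>2 * eta t / 2 * (norm (y (Suc t) - y t))\<^sup>2)"
proof -
  define B where "B = (\<Sum>k<t. beta k)"
  define c where "c = 1 + B * mu"
  define Phi where "Phi = (\<lambda>t z r. (norm (z - x 0))\<^sup>2 / 2 + (\<Sum>k<t. beta k * (r + y (Suc k) \<bullet> (A *v z))))"
  have B0: "B \<ge> 0" unfolding B_def using steps(1) by (simp add: sum_nonneg less_imp_le)
  have claim1: "\<exists>P. DAPD_phi_star A g beta (x 0) y t \<le> ereal P \<and>
      (\<forall>z r. g z = ereal r \<longrightarrow> P + c / 2 * (norm (z - x t))\<^sup>2 \<le> Phi t z r)"
  proof (cases t)
    case 0
    have "DAPD_phi_star A g beta (x 0) y t \<le> DAPD_phi A g beta (x 0) y t (x 0)"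
      unfolding DAPD_phi_star_def by (rule INF_lower) simp
    also have "\<dots> = ereal 0" using 0 by (simp add: DAPD_phi_def)
    finally show ?thesis using 0 by (intro exI[of _ 0]) (simp add: Phi_def c_def B_def)
  next
    case (Suc m)
    define w where "w = (\<Sum>j\<le>m. beta j *\<^sub>R (transpose A *v y (Suc j)))"
    have Bm: "B = (\<Sum>j\<le>m. beta j)" unfolding B_def Suc lessThan_Suc_atMost ..
    have Bpos: "B > 0" unfolding Bm using steps(1) by (simp add: sum_pos)
    have wm: "w = (\<Sum>j<t. beta j *\<^sub>R (transpose A *v y (Suc j)))" unfolding w_def Suc lessThan_Suc_atMost ..
    from three_point[OF g_cl(1) g_sc(2) g_sc(1) Bpos, of "x 0 - w" "x t"] x_def[of m]
    have tp: "g (x t) \<noteq> \<infinity> \<and> g (x t) \<noteq> -\<infinity> \<and>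
      (\<forall>z r. g z = ereal r \<longrightarrow>
        B * real_of_ereal (g (x t)) + (norm (x t - (x 0 - w)))\<^sup>2 / 2 + (1 + B * mu) / 2 * (norm (z - x t))\<^sup>2
          \<le> B * r + (norm (z - (x 0 - w)))\<^sup>2 / 2)"
      unfolding Bm w_def Suc by simp
    then obtain rv where rv: "g (x t) = ereal rv" by (cases "g (x t)") auto
    have PhiEq: "Phi t z r = B * r + (norm (z - (x 0 - w)))\<^sup>2 / 2 + w \<bullet> x 0 - (norm w)\<^sup>2 / 2" for z r
      unfolding Phi_def sum_lin norm_shift_sq B_def wm by (simp add: field_simps)
    show ?thesis
    proof (intro exI[of _ "Phi t (x t) rv"] conjI allI impI)
      have "DAPD_phi_star A g beta (x 0) y t \<le> DAPD_phi A g beta (x 0) y t (x t)"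
        unfolding DAPD_phi_star_def by (rule INF_lower) simp
      also have "\<dots> = ereal (Phi t (x t) rv)" using rv by (simp add: phi_fin Phi_def)
      finally show "DAPD_phi_star A g beta (x 0) y t \<le> ereal (Phi t (x t) rv)" .
    next
      fix z r assume "g z = ereal r"
      with tp rv have "B * rv + (norm (x t - (x 0 - w)))\<^sup>2 / 2 + (1 + B * mu) / 2 * (norm (z - x t))\<^sup>2
          \<le> B * r + (norm (z - (x 0 - w)))\<^sup>2 / 2" by auto
      thus "Phi t (x t) rv + c / 2 * (norm (z - x t))\<^sup>2 \<le> Phi t z r"
        unfolding PhiEq c_def by simp
    qed
  qed
  then obtain P where P1: "DAPD_phi_star A g beta (x 0) y t \<le> ereal P"
    and P2: "\<And>z r. g z = ereal r \<Longrightarrow> P + c / 2 * (norm (z - x t))\<^sup>2 \<le> Phi t z r" by blast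
  define xb where "xb = xbar (Suc t)"
  define a where "a = transpose A *v y t"
  define et where "et = eta t"
  define bt where "bt = beta t"
  define R where "R = onorm (\<lambda>v. A *v v)"
  define d where "d = y (Suc t) - y t"
  define E where "E = bt * R\<^sup>2 * et / 2 * (norm d)\<^sup>2"
  have et0: "et > 0" and bt0: "bt > 0" using steps by (auto simp: et_def bt_def)
  have R0: "R \<ge> 0" unfolding R_def by (rule onorm_pos_le) simp
  from three_point[OF g_cl(1) g_sc(2) g_sc(1) et0, of "x t - et *\<^sub>R a" xb] xbar_def[of t]
  have tp2: "g xb \<noteq> \<infinity> \<and> g xb \<noteq> -\<infinity> \<and>
      (\<forall>z r. g z = ereal r \<longrightarrow>
        et * real_of_ereal (g xb) + (norm (xb - (x t - et *\<^sub>R a)))\<^sup>2 / 2 + (1 + et * mu) / 2 * (norm (z - xb))\<^sup>2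
          \<le> et * r + (norm (z - (x t - et *\<^sub>R a)))\<^sup>2 / 2)"
    unfolding et_def a_def xb_def by simp
  then obtain Gb where Gb: "g xb = ereal Gb" by (cases "g xb") auto
  define Q where "Q = Gb + y (Suc t) \<bullet> (A *v xb)"
  have key: "P + bt * Q - E \<le> Phi (Suc t) z r" if gz: "g z = ereal r" for z r
  proof -
    define D1 where "D1 = (norm (z - x t))\<^sup>2"
    define D2 where "D2 = (norm (z - xb))\<^sup>2"
    have a1: "P + c / 2 * D1 \<le> Phi t z r" using P2[OF gz] by (simp add: D1_def)
    have PhiS: "Phi (Suc t) z r = Phi t z r + bt * (r + y (Suc t) \<bullet> (A *v z))"
      by (simp add: Phi_def bt_def)
    from tp2 gz Gb have b0: "et * Gb + (norm (xb - (x t - et *\<^sub>R a)))\<^sup>2 / 2 + (1 + et * mu) / 2 * D2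
          \<le> et * r + (norm (z - (x t - et *\<^sub>R a)))\<^sup>2 / 2" by (auto simp: D2_def)
    have az: "a \<bullet> z = y t \<bullet> (A *v z)" and axb: "a \<bullet> xb = y t \<bullet> (A *v xb)"
      by (simp_all add: a_def dot_lmul_matrix)
    have b1: "et * Gb + et * (a \<bullet> xb) + (1 + et * mu) / 2 * D2 \<le> et * r + D1 / 2 + et * (a \<bullet> z)"
    proof -
      have b0x: "et*Gb + ((norm (xb - x t))\<^sup>2 + 2*(et*(a\<bullet>xb)) - 2*(et*(a\<bullet>x t)) + (norm (et *\<^sub>R a))\<^sup>2)/2 + (1+et*mu)/2*D2
         \<le> et*r + (D1 + 2*(et*(a\<bullet>z)) - 2*(et*(a\<bullet>x t)) + (norm (et *\<^sub>R a))\<^sup>2)/2"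
        using b0 unfolding norm_shift_sq D1_def by (simp only: inner_scaleR_left)
      define p2 where "p2 = et*(a\<bullet>xb)"
      define p3 where "p3 = et*(a\<bullet>x t)"
      define p5 where "p5 = et*(a\<bullet>z)"
      define K where "K = (1+et*mu)/2*D2"
      define N where "N = (norm (xb - x t))\<^sup>2"
      define M where "M = (norm (et *\<^sub>R a))\<^sup>2"
      define q where "q = et * Gb"
      define q2 where "q2 = et * r"
      have "q + (N + 2*p2 - 2*p3 + M)/2 + K \<le> q2 + (D1 + 2*p5 - 2*p3 + M)/2" "N \<ge> 0"
        using b0x unfolding p2_def p3_def p5_def K_def N_def M_def q_def q2_def by simp_all
      hence "q + p2 + K \<le> q2 + D1/2 + p5" by (simp add: field_simps)
      thus ?thesis unfolding p2_def p3_def p5_def K_def N_def M_def q_def q2_def .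
    qed
    have D2nn: "D2 \<ge> 0" "D1 \<ge> 0" by (simp_all add: D1_def D2_def)
    have "D2 / 2 \<le> (1 + et * mu) / 2 * D2" using D2nn et0 g_sc(1) by (simp add: field_simps)
    with b1 have b1': "et * Gb + et * (a \<bullet> xb) + D2 / 2 \<le> et * r + D1 / 2 + et * (a \<bullet> z)" by linarith
    have b2: "Gb + a \<bullet> xb + D2 / (2 * et) \<le> r + D1 / (2 * et) + a \<bullet> z"
    proof -
      have l: "et * (Gb + a \<bullet> xb + D2 / (2 * et)) = et * Gb + et * (a \<bullet> xb) + D2 / 2"
        using et0 by (simp add: field_simps)
      have r: "et * (r + D1 / (2 * et) + a \<bullet> z) = et * r + D1 / 2 + et * (a \<bullet> z)"
        using et0 by (simp add: field_simps)
      have "et * (Gb + a \<bullet> xb + D2 / (2 * et)) \<le> et * (r + D1 / (2 * et) + a \<bullet> z)"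
        unfolding l r by (rule b1')
      thus ?thesis using et0 by (simp add: mult_le_cancel_left_pos)
    qed
    have b3: "bt * Gb + bt * (a \<bullet> xb) + bt * D2 / (2 * et) \<le> bt * r + bt * D1 / (2 * et) + bt * (a \<bullet> z)"
      using mult_left_mono[OF b2, of bt] bt0 by (simp add: algebra_simps)
    have "bt \<le> et * c" using step_cond by (simp add: bt_def et_def c_def B_def mult.commute)
    hence "bt / (2 * et) \<le> c / 2" using et0 by (simp add: field_simps)
    from mult_right_mono[OF this D2nn(2)]
    have c1: "bt * D1 / (2 * et) \<le> c / 2 * D1" by simp
    define s where "s = norm (z - xb)"
    have D2s: "D2 = s\<^sup>2" by (simp add: s_def D2_def)
    have "(- d) \<bullet> (A *v (z - xb)) \<le> norm d * norm (A *v (z - xb))"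
      using norm_cauchy_schwarz[of "- d" "A *v (z - xb)"] by simp
    also have "norm (A *v (z - xb)) \<le> R * s" unfolding R_def s_def
      by (rule onorm) simp
    hence "norm d * norm (A *v (z - xb)) \<le> norm d * (R * s)" by (simp add: mult_left_mono)
    finally have cs: "- (d \<bullet> (A *v (z - xb))) \<le> s * (R * norm d)" by (simp add: algebra_simps)
    also have "\<dots> \<le> s\<^sup>2 / (2 * et) + et * (R * norm d)\<^sup>2 / 2" by (rule amgm_aux[OF et0])
    finally have cs2: "- (d \<bullet> (A *v (z - xb))) \<le> D2 / (2 * et) + et * (R * norm d)\<^sup>2 / 2"
      unfolding D2s .
    have cs3: "- (bt * (d \<bullet> (A *v (z - xb)))) \<le> bt * D2 / (2 * et) + E"
      using mult_left_mono[OF cs2, of bt] bt0 by (simp add: E_def algebra_simps power2_eq_square)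
    have split: "d \<bullet> (A *v (z - xb)) = y (Suc t) \<bullet> (A *v z) - y t \<bullet> (A *v z) - y (Suc t) \<bullet> (A *v xb) + y t \<bullet> (A *v xb)"
      by (simp add: d_def matrix_vector_mult_diff_distrib inner_diff_left inner_diff_right)
    have cs4: "bt * (y t \<bullet> (A *v z)) - bt * (y (Suc t) \<bullet> (A *v z)) + bt * (y (Suc t) \<bullet> (A *v xb)) - bt * (y t \<bullet> (A *v xb)) \<le> bt * D2 / (2 * et) + E"
      using cs3 unfolding split by (simp add: algebra_simps)
    have e1: "Phi (Suc t) z r = Phi t z r + bt * r + bt * (y (Suc t) \<bullet> (A *v z))" using PhiS by (simp add: algebra_simps)
    have e2: "bt * Q = bt * Gb + bt * (y (Suc t) \<bullet> (A *v xb))" by (simp add: Q_def algebra_simps)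
    note b3' = b3[unfolded az axb]
    show ?thesis using a1 b3' c1 cs4 e1 e2 by linarith
  qed
  have inf: "ereal (P + bt * Q - E) \<le> DAPD_phi_star A g beta (x 0) y (Suc t)"
    unfolding DAPD_phi_star_def
  proof (rule INF_greatest)
    fix z :: "real^'d"
    have "g z \<noteq> -\<infinity>" using g_cl(1) by (simp add: proper_fun_def)
    then consider r where "g z = ereal r" | "g z = \<infinity>" by (cases "g z") auto
    thus "ereal (P + bt * Q - E) \<le> DAPD_phi A g beta (x 0) y (Suc t) z"
    proof cases
      case (1 r)
      thus ?thesis using key[OF 1] by (simp add: phi_fin Phi_def)
    next
      case 2
      thus ?thesis using phi_inf[of g z beta "Suc t" A "x 0" y, OF 2 steps(1)] by simp
    qed
  qed
  have rhs: "ereal (beta t) * (g (xbar (Suc t)) + ereal (y (Suc t) \<bullet> (A *v xbar (Suc t)))) = ereal (bt * Q)"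
    using Gb by (simp add: xb_def bt_def Q_def)
  have Eeq: "ereal (beta t * (onorm (\<lambda>v. A *v v))\<^sup>2 * eta t / 2 * (norm (y (Suc t) - y t))\<^sup>2) = ereal E"
    by (simp add: E_def bt_def R_def et_def d_def)
  have fin: "DAPD_phi_star A g beta (x 0) y t + ereal (bt * Q) - ereal E \<le> DAPD_phi_star A g beta (x 0) y (Suc t)"
  proof (cases "DAPD_phi_star A g beta (x 0) y t")
    case (real r)
    with P1 have "r \<le> P" by simp
    hence "ereal r + ereal (bt * Q) - ereal E \<le> ereal (P + bt * Q - E)" by simp
    also note inf
    finally show ?thesis using real by simp
  next
    case PInf with P1 show ?thesis by simp
  next
    case MInf thus ?thesis by simp
  qed
  show ?thesis unfolding rhs Eeq by (rule fin)
qed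

end
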